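(* For every integer $d\ge1$ there exists a hypergraph $H$ of separated $d$-intervals with $\nu(H)=1$ and $\tau(H)=\tau^*(H)=d$.
   Context: Fix $d$ pairwise disjoint copies $L_1,\dots,L_d$ of the real line. A separated $d$-interval is a set $h=h^1\cup\dots\cup h^d$ where each $h^j$ is either empty or a closed interval in $L_j$. A hypergraph of separated $d$-intervals is a finite family of separated $d$-intervals, regarded as a hypergraph on vertex set $L_1\cup\dots\cup L_d$. $\nu(H)$ is the maximum size of a set of pairwise disjoint edges; $\tau(H)$ the minimum size of a set of points meeting every edge; $\tau^*(H)$ the minimum of $\sum_v g(v)$ over finitely supported $g\ge0$ on the vertices with $\sum_{v\in h}g(v)\ge1$ for all edges $h$. *)

theory Defs
  imports Complex_Main
begin

text \<open>Vertex set: d disjoint copies L_0,...,L_(d-1) of the real line,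
  realised as pairs (j, x) with j < d.\<close>

definition vertices :: "nat \<Rightarrow> (nat \<times> real) set" where
  "vertices d = {v. fst v < d}"

definition sep_d_interval :: "nat \<Rightarrow> (nat \<times> real) set \<Rightarrow> bool" where
  "sep_d_interval d h \<longleftrightarrow> h \<subseteq> vertices d \<and>
     (\<forall>j<d. {x. (j, x) \<in> h} = {} \<or> (\<exists>a b. a \<le> b \<and> {x. (j, x) \<in> h} = {a..b}))"

definition hypergraph_sep :: "nat \<Rightarrow> (nat \<times> real) set set \<Rightarrow> bool" where
  "hypergraph_sep d H \<longleftrightarrow> finite H \<and> (\<forall>h\<in>H. sep_d_interval d h)"

definition matching_num :: "'v set set \<Rightarrow> nat" where
  "matching_num H = Max {card F | F. F \<subseteq> H \<and>
      (\<forall>e\<in>F. \<forall>f\<in>F. e \<noteq> f \<longrightarrow> e \<inter> f = {})}"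

definition cover_num :: "'v set \<Rightarrow> 'v set set \<Rightarrow> nat" where
  "cover_num V H = Inf {card T | T. T \<subseteq> V \<and> finite T \<and> (\<forall>h\<in>H. h \<inter> T \<noteq> {})}"

definition frac_cover_num :: "'v set \<Rightarrow> 'v set set \<Rightarrow> real" where
  "frac_cover_num V H = Inf {(\<Sum>v\<in>{v. g v \<noteq> 0}. g v) | g :: 'v \<Rightarrow> real.
      finite {v. g v \<noteq> 0} \<and> {v. g v \<noteq> 0} \<subseteq> V \<and> (\<forall>v. g v \<ge> 0) \<and>
      (\<forall>h\<in>H. (\<Sum>v\<in>h \<inter> {v. g v \<noteq> 0}. g v) \<ge> 1)}"

end

theory Submission
  imports Defs
begin

definition pp :: "int \<Rightarrow> int" where
  "pp a = 2 * \<bar>a\<bar> - (if a > 0 then 1 else 0)"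

definition xp :: "nat \<Rightarrow> nat \<Rightarrow> nat \<Rightarrow> int" where
  "xp d i v = (if int v - int i > int d then int v - int i - 2 * int d else int v - int i)"

definition pos :: "nat \<Rightarrow> nat \<Rightarrow> nat \<Rightarrow> int" where
  "pos d i v = pp (xp d i v)"

lemma pp_inj: "pp a = pp b \<Longrightarrow> a = b"
  unfolding pp_def abs_if by presburger

lemma pp_adj: "a + b = 0 \<or> a + b = 1 \<Longrightarrow> \<bar>pp a - pp b\<bar> \<le> 1"
  unfolding pp_def by (cases "a > 0"; cases "b > 0") (auto simp: abs_if split: if_splits)

lemma xp_facts:
  assumes "v < 2*d" "i < d"
  shows "(xp d i v = int v - int i \<or> xp d i v = int v - int i - 2 * int d) \<and>
         - int d < xp d i v \<and> xp d i v \<le> int d"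
  using assms unfolding xp_def by auto

lemma pos_inj:
  assumes "u < 2*d" "v < 2*d" "i < d" "pos d i u = pos d i v" shows "u = v"
proof -
  have e: "xp d i u = xp d i v" using assms(4) pp_inj unfolding pos_def by blast
  have fu: "xp d i u = int u - int i \<or> xp d i u = int u - int i - 2 * int d"
    using xp_facts[OF assms(1,3)] by blast
  have fv: "xp d i v = int v - int i \<or> xp d i v = int v - int i - 2 * int d"
    using xp_facts[OF assms(2,3)] by blast
  from fu fv e assms(1,2) show ?thesis by (elim disjE) linarith+
qed

lemma pos_range:
  assumes "v < 2*d" "i < d" shows "0 \<le> pos d i v \<and> pos d i v \<le> 2 * int d - 1"
proof -
  have "- int d < xp d i v" "xp d i v \<le> int d" using xp_facts[OF assms] by auto
  then show ?thesis unfolding pos_def pp_def by (cases "xp d i v > 0") auto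
qed

lemma pos_adj_aux:
  assumes u: "u < 2*d" and v: "v < 2*d" and uv: "u \<noteq> v" and i: "i < d"
    and s: "int u + int v - 2 * int i \<in> {0, 1, 2 * int d, 2 * int d + 1}"
  shows "\<bar>pos d i u - pos d i v\<bar> \<le> 1"
proof -
  have fu: "xp d i u = int u - int i \<or> xp d i u = int u - int i - 2 * int d"
       "- int d < xp d i u" "xp d i u \<le> int d"
    using xp_facts[OF u i] by blast+
  have fv: "xp d i v = int v - int i \<or> xp d i v = int v - int i - 2 * int d"
       "- int d < xp d i v" "xp d i v \<le> int d"
    using xp_facts[OF v i] by blast+
  have ne: "xp d i u \<noteq> xp d i v" using pp_inj pos_inj[OF u v i] uv unfolding pos_def by metis
  have "xp d i u + xp d i v = 0 \<or> xp d i u + xp d i v = 1"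
    using fu fv ne s by (elim disjE; simp; linarith)
  then show ?thesis unfolding pos_def by (rule pp_adj)
qed

lemma pos_adj:
  assumes "u < 2*d" "v < 2*d" "u \<noteq> v"
  shows "\<exists>i<d. \<bar>pos d i u - pos d i v\<bar> \<le> 1"
proof (cases "u + v < 2*d")
  case True
  have i: "(u+v) div 2 < d" using True by linarith
  have "2 * ((u+v) div 2) = u + v \<or> 2 * ((u+v) div 2) + 1 = u + v" by presburger
  then have "int u + int v - 2 * int ((u+v) div 2) \<in> {0, 1, 2 * int d, 2 * int d + 1}" by auto
  then show ?thesis using pos_adj_aux[OF assms i] i by blast
next
  case False
  define k where "k = (u+v - 2*d) div 2"
  have i: "k < d" using False assms unfolding k_def by linarith
  have "2 * k + 2*d = u + v \<or> 2 * k + 1 + 2*d = u + v" using False unfolding k_def by presburger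
  then have "int u + int v - 2 * int k \<in> {0, 1, 2 * int d, 2 * int d + 1}"
    by (simp; presburger)
  then show ?thesis using pos_adj_aux[OF assms i] i by blast
qed

definition E :: "nat \<Rightarrow> nat \<Rightarrow> (nat \<times> real) set" where
  "E d v = {(i, y). i < d \<and> of_int (pos d i v) \<le> y \<and> y \<le> of_int (pos d i v) + 1}"

lemma E_meet:
  assumes "u < 2*d" "v < 2*d" "u \<noteq> v" shows "E d u \<inter> E d v \<noteq> {}"
proof -
  obtain i where i: "i < d" "\<bar>pos d i u - pos d i v\<bar> \<le> 1" using pos_adj[OF assms] by blast
  define m where "m = max (pos d i u) (pos d i v)"
  have a: "pos d i u \<le> m" "m \<le> pos d i u + 1" "pos d i v \<le> m" "m \<le> pos d i v + 1"
    using i(2) unfolding m_def by (simp_all add: max_def abs_if split: if_splits)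
  have b: "real_of_int (pos d i u) \<le> of_int m" "real_of_int m \<le> of_int (pos d i u + 1)"
    "real_of_int (pos d i v) \<le> of_int m" "real_of_int m \<le> of_int (pos d i v + 1)"
    using a by (simp_all only: of_int_le_iff)
  have "(i, real_of_int m) \<in> E d u" "(i, real_of_int m) \<in> E d v"
    using i(1) b unfolding E_def by auto
  thus ?thesis by blast
qed

lemma card_pos_eq:
  assumes "i < d" shows "card {v\<in>{..<2*d}. pos d i v = p} \<le> 1"
proof -
  have "card {v\<in>{..<2*d}. pos d i v = p} \<le> Suc 0"
    by (rule card_le_Suc0_iff_eq[THEN iffD2]) (use pos_inj[OF _ _ assms] in auto)
  then show ?thesis by simp
qed

lemma load:
  "card {v\<in>{..<2*d}. w \<in> E d v} \<le> 2"
proof (cases w)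
  case (Pair i y)
  show ?thesis
  proof (cases "i < d")
    case False
    then have "{v\<in>{..<2*d}. w \<in> E d v} = {}" using Pair by (auto simp: E_def)
    then show ?thesis by (metis card.empty zero_le)
  next
    case True
    have sub: "{v\<in>{..<2*d}. w \<in> E d v} \<subseteq> {v\<in>{..<2*d}. pos d i v = \<lfloor>y\<rfloor>} \<union> {v\<in>{..<2*d}. pos d i v = \<lfloor>y\<rfloor> - 1}"
    proof
      fix v assume "v \<in> {v\<in>{..<2*d}. w \<in> E d v}"
      then have "v < 2*d" "of_int (pos d i v) \<le> y" "y \<le> of_int (pos d i v) + 1"
        using Pair by (auto simp: E_def)
      moreover have "pos d i v \<le> \<lfloor>y\<rfloor>" using calculation(2) by (simp add: le_floor_iff)
      moreover have "\<lfloor>y\<rfloor> \<le> \<lfloor>of_int (pos d i v) + (1::real)\<rfloor>" using calculation(3) by (rule floor_mono)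
      then have "\<lfloor>y\<rfloor> \<le> pos d i v + 1" by simp
      ultimately show "v \<in> {v\<in>{..<2*d}. pos d i v = \<lfloor>y\<rfloor>} \<union> {v\<in>{..<2*d}. pos d i v = \<lfloor>y\<rfloor> - 1}"
        by auto
    qed
    have "card {v\<in>{..<2*d}. w \<in> E d v} \<le> card ({v\<in>{..<2*d}. pos d i v = \<lfloor>y\<rfloor>} \<union> {v\<in>{..<2*d}. pos d i v = \<lfloor>y\<rfloor> - 1})"
      by (rule card_mono[OF _ sub]) auto
    also have "\<dots> \<le> card {v\<in>{..<2*d}. pos d i v = \<lfloor>y\<rfloor>} + card {v\<in>{..<2*d}. pos d i v = \<lfloor>y\<rfloor> - 1}"
      by (rule card_Un_le)
    also have "\<dots> \<le> 2" using card_pos_eq[OF True, of "\<lfloor>y\<rfloor>"] card_pos_eq[OF True, of "\<lfloor>y\<rfloor> - 1"] by linarith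
    finally show ?thesis .
  qed
qed

lemma key:
  fixes g :: "nat \<times> real \<Rightarrow> real"
  assumes fin: "finite S" and nonneg: "\<And>v. g v \<ge> 0"
    and feas: "\<And>v. v < 2*d \<Longrightarrow> (\<Sum>w\<in>E d v \<inter> S. g w) \<ge> 1"
  shows "(\<Sum>w\<in>S. g w) \<ge> real d"
proof -
  have "real (2*d) = (\<Sum>v<2*d. (1::real))" by simp
  also have "\<dots> \<le> (\<Sum>v<2*d. \<Sum>w\<in>E d v \<inter> S. g w)"
    by (rule sum_mono) (use feas in auto)
  also have "\<dots> = (\<Sum>v<2*d. \<Sum>w\<in>S. if w \<in> E d v then g w else 0)"
    by (rule sum.cong[OF refl]) (simp add: sum.inter_restrict[OF fin] Int_commute)
  also have "\<dots> = (\<Sum>w\<in>S. \<Sum>v<2*d. if w \<in> E d v then g w else 0)"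
    by (rule sum.swap)
  also have "\<dots> = (\<Sum>w\<in>S. g w * real (card {v\<in>{..<2*d}. w \<in> E d v}))"
  proof (rule sum.cong[OF refl])
    fix w
    have "(\<Sum>v<2*d. if w \<in> E d v then g w else 0) = (\<Sum>v\<in>{v\<in>{..<2*d}. w \<in> E d v}. g w)"
      by (rule sum.inter_filter[symmetric]) simp
    also have "\<dots> = g w * real (card {v\<in>{..<2*d}. w \<in> E d v})" by (simp only: sum_constant mult.commute)
    finally show "(\<Sum>v<2*d. if w \<in> E d v then g w else 0) = g w * real (card {v\<in>{..<2*d}. w \<in> E d v})" .
  qed
  also have "\<dots> \<le> (\<Sum>w\<in>S. g w * 2)"
    by (rule sum_mono, rule mult_left_mono) (use load nonneg in auto)
  finally have "real (2*d) \<le> (\<Sum>w\<in>S. g w) * 2" by (simp add: sum_distrib_right)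
  then show ?thesis by simp
qed

definition T0 :: "nat \<Rightarrow> (nat \<times> real) set" where
  "T0 d = (\<lambda>t. (0, real (2*t+1))) ` {..<d}"

lemma T0_card: "card (T0 d) = d"
  unfolding T0_def by (subst card_image) (auto simp: inj_on_def)

lemma T0_hits:
  assumes "d \<ge> 1" "v < 2*d" shows "E d v \<inter> T0 d \<noteq> {}"
proof -
  have r: "0 \<le> pos d 0 v" "pos d 0 v \<le> 2 * int d - 1" using pos_range[OF assms(2)] assms(1) by auto
  obtain n where n: "pos d 0 v = int n" using r(1) zero_le_imp_eq_int by blast
  define t where "t = n div 2"
  have t: "t < d" using r n unfolding t_def by linarith
  have "2*t+1 = n \<or> 2*t+1 = n + 1" unfolding t_def by presburger
  then have "real (2*t+1) = of_int (pos d 0 v) \<or> real (2*t+1) = of_int (pos d 0 v) + 1"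
    unfolding n by auto
  then have "(0, real (2*t+1)) \<in> E d v" using assms(1) unfolding E_def by auto
  moreover have "(0, real (2*t+1)) \<in> T0 d" using t unfolding T0_def by auto
  ultimately show ?thesis by blast
qed

lemma T0_vertices: "d \<ge> 1 \<Longrightarrow> T0 d \<subseteq> vertices d"
  unfolding T0_def vertices_def by auto

theorem mainTheorem14:
  fixes d :: nat
  assumes "d \<ge> 1"
  shows "\<exists>H. hypergraph_sep d H \<and> matching_num H = 1 \<and>
           cover_num (vertices d) H = d \<and> frac_cover_num (vertices d) H = real d"
proof (intro exI conjI)
  let ?H = "E d ` {..<2*d}"
  show "hypergraph_sep d ?H"
    unfolding hypergraph_sep_def
  proof (intro conjI ballI)
    show "finite ?H" by simp
    fix h assume "h \<in> ?H"
    then obtain v where h: "h = E d v" by blast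
    show "sep_d_interval d h"
      unfolding sep_d_interval_def
    proof (intro conjI allI impI)
      show "h \<subseteq> vertices d" unfolding h E_def vertices_def by auto
      fix j assume "j < d"
      then have "{x. (j, x) \<in> h} = {of_int (pos d j v) .. of_int (pos d j v) + 1}"
        unfolding h E_def by auto
      then show "{x. (j, x) \<in> h} = {} \<or> (\<exists>a b. a \<le> b \<and> {x. (j, x) \<in> h} = {a..b})"
        by (intro disjI2 exI[of _ "of_int (pos d j v)"] exI[of _ "of_int (pos d j v) + 1"]) auto
    qed
  qed
  show "matching_num ?H = 1"
    unfolding matching_num_def
  proof (rule Max_eqI)
    have "\<And>F. F \<subseteq> ?H \<Longrightarrow> (\<forall>e\<in>F. \<forall>f\<in>F. e \<noteq> f \<longrightarrow> e \<inter> f = {}) \<Longrightarrow> card F \<le> 1"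
    proof -
      fix F assume F: "F \<subseteq> ?H" "\<forall>e\<in>F. \<forall>f\<in>F. e \<noteq> f \<longrightarrow> e \<inter> f = {}"
      show "card F \<le> 1"
      proof -
        have fF: "finite F" using F(1) finite_subset by blast
        have "\<forall>x\<in>F. \<forall>y\<in>F. x = y"
        proof (intro ballI, rule ccontr)
          fix x y assume xy: "x \<in> F" "y \<in> F" "x \<noteq> y"
          then obtain u v where "x = E d u" "y = E d v" "u < 2*d" "v < 2*d" using F(1) by blast
          moreover have "u \<noteq> v" using xy calculation by blast
          ultimately show False using E_meet F(2) xy by metis
        qed
        then have "card F \<le> Suc 0" using card_le_Suc0_iff_eq[OF fF] by blast
        then show ?thesis by simp
      qed
    qed
    then show "\<And>y. y \<in> {card F |F. F \<subseteq> ?H \<and> (\<forall>e\<in>F. \<forall>f\<in>F. e \<noteq> f \<longrightarrow> e \<inter> f = {})} \<Longrightarrow> y \<le> 1"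
      by blast
    then show "finite {card F |F. F \<subseteq> ?H \<and> (\<forall>e\<in>F. \<forall>f\<in>F. e \<noteq> f \<longrightarrow> e \<inter> f = {})}"
      by (meson finite_atMost finite_subset subsetI atMost_iff)
    have "{E d 0} \<subseteq> ?H" using assms by auto
    then show "1 \<in> {card F |F. F \<subseteq> ?H \<and> (\<forall>e\<in>F. \<forall>f\<in>F. e \<noteq> f \<longrightarrow> e \<inter> f = {})}"
      by (intro CollectI exI[of _ "{E d 0}"]) auto
  qed
  show "cover_num (vertices d) ?H = d"
    unfolding cover_num_def
  proof (rule cInf_eq_minimum)
    show "d \<in> {card T |T. T \<subseteq> vertices d \<and> finite T \<and> (\<forall>h\<in>?H. h \<inter> T \<noteq> {})}"
      using T0_card T0_vertices[OF assms] T0_hits[OF assms]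
      by (intro CollectI exI[of _ "T0 d"]) (auto simp: T0_def)
    fix x assume "x \<in> {card T |T. T \<subseteq> vertices d \<and> finite T \<and> (\<forall>h\<in>?H. h \<inter> T \<noteq> {})}"
    then obtain T where T: "x = card T" "finite T" "\<forall>h\<in>?H. h \<inter> T \<noteq> {}" by blast
    have "(\<Sum>w\<in>T. (1::real)) \<ge> real d"
    proof (rule key[OF T(2)])
      fix v assume "v < 2*d"
      then have ne: "E d v \<inter> T \<noteq> {}" using T(3) by auto
      have "card (E d v \<inter> T) \<ge> 1" using ne T(2)
        by (metis One_nat_def Suc_leI card_gt_0_iff finite_Int)
      then show "(\<Sum>w\<in>E d v \<inter> T. (1::real)) \<ge> 1" by simp
    qed simp
    then show "d \<le> x" using T(1) by simp
  qed
  show "frac_cover_num (vertices d) ?H = real d"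
    unfolding frac_cover_num_def
  proof (rule cInf_eq_minimum)
    let ?g = "\<lambda>w. if w \<in> T0 d then (1::real) else 0"
    have supp: "{v. ?g v \<noteq> 0} = T0 d" by auto
    have fin: "finite (T0 d)" unfolding T0_def by simp
    show "real d \<in> {\<Sum>v\<in>{v. g v \<noteq> 0}. g v |g. finite {v. g v \<noteq> 0} \<and> {v. g v \<noteq> 0} \<subseteq> vertices d \<and>
          (\<forall>v. 0 \<le> g v) \<and> (\<forall>h\<in>?H. 1 \<le> (\<Sum>v\<in>h \<inter> {v. g v \<noteq> 0}. g v))}"
    proof (intro CollectI exI[of _ ?g] conjI allI ballI)
      show "real d = (\<Sum>v\<in>{v. ?g v \<noteq> 0}. ?g v)" unfolding supp using T0_card by simp
      show "finite {v. ?g v \<noteq> 0}" unfolding supp by (rule fin)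
      show "{v. ?g v \<noteq> 0} \<subseteq> vertices d" unfolding supp by (rule T0_vertices[OF assms])
      show "0 \<le> ?g v" for v by simp
      fix h assume "h \<in> ?H"
      then obtain v where h: "h = E d v" "v < 2*d" by blast
      have "card (h \<inter> T0 d) \<ge> 1" using T0_hits[OF assms h(2)] fin h(1)
        by (metis One_nat_def Suc_leI card_gt_0_iff finite_Int)
      then show "1 \<le> (\<Sum>v\<in>h \<inter> {v. ?g v \<noteq> 0}. ?g v)" unfolding supp by simp
    qed
    fix x :: real assume "x \<in> {\<Sum>v\<in>{v. g v \<noteq> 0}. g v |g. finite {v. g v \<noteq> 0} \<and> {v. g v \<noteq> 0} \<subseteq> vertices d \<and>
          (\<forall>v. 0 \<le> g v) \<and> (\<forall>h\<in>?H. 1 \<le> (\<Sum>v\<in>h \<inter> {v. g v \<noteq> 0}. g v))}"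
    then obtain g :: "nat \<times> real \<Rightarrow> real" where g: "x = (\<Sum>v\<in>{v. g v \<noteq> 0}. g v)" "finite {v. g v \<noteq> 0}"
      "\<forall>v. 0 \<le> g v" "\<forall>h\<in>?H. 1 \<le> (\<Sum>v\<in>h \<inter> {v. g v \<noteq> 0}. g v)" by blast
    show "real d \<le> x" unfolding g(1)
      by (rule key[OF g(2)]) (use g(3,4) in auto)
  qed
qed

end
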